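(* Let $f,g,h$ be smooth real functions of one variable with $f\neq 0$, $g\neq 0$, $g'\neq 0$. Then the equation $$u_t-f(u)u_x-g(u)u_{xx}+h(u)u_x^2=0$$ is quasi self-adjoint with the substitution $$\phi(u)=M\exp\left(-\int\frac{g'(u)+h(u)}{g(u)}\,du\right),$$ where $M\neq 0$ is a constant.
   Context: For a differential equation $\mathfrak{F}[u]=0$ in independent variables $t,x$ and dependent variable $u$, introduce a new dependent variable $\nu=\nu(t,x)$. The formal Lagrangian is $\mathfrak{L}=\nu\mathfrak{F}$ and the adjoint is $\mathfrak{F}^*=\frac{\delta\mathfrak{L}}{\delta u}$, where $\frac{\delta}{\delta u}=\frac{\partial}{\partial u}-D_t\frac{\partial}{\partial u_t}-D_x\frac{\partial}{\partial u_x}+D_x^2\frac{\partial}{\partial u_{xx}}$ and $D_t,D_x$ are total derivatives. The equation is quasi self-adjoint if there is a substitution $\nu=\phi(u)\neq 0$ (derivatives of $\nu$ replaced by total derivatives of $\phi(u)$) such that $\mathfrak{F}^*|_{\nu=\phi(u)}=\lambda\mathfrak{F}$ for some coefficient $\lambda=\lambda(t,x,u,\dots)$. *)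

theory Defs
  imports "HOL-Analysis.Analysis"
begin

definition pdt :: "(real \<Rightarrow> real \<Rightarrow> real) \<Rightarrow> real \<Rightarrow> real \<Rightarrow> real" where
  "pdt w t x = deriv (\<lambda>s. w s x) t"

definition pdx :: "(real \<Rightarrow> real \<Rightarrow> real) \<Rightarrow> real \<Rightarrow> real \<Rightarrow> real" where
  "pdx w t x = deriv (\<lambda>y. w t y) x"

fun iterD :: "bool list \<Rightarrow> (real \<Rightarrow> real \<Rightarrow> real) \<Rightarrow> (real \<Rightarrow> real \<Rightarrow> real)" where
  "iterD [] w = w"
| "iterD (b # bs) w = (if b then pdt else pdx) (iterD bs w)"

definition smooth2 :: "(real \<Rightarrow> real \<Rightarrow> real) \<Rightarrow> bool" where
  "smooth2 w \<longleftrightarrow> (\<forall>bs p. (\<lambda>q. iterD bs w (fst q) (snd q)) differentiable (at p))"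

definition smooth1 :: "(real \<Rightarrow> real) \<Rightarrow> bool" where
  "smooth1 f \<longleftrightarrow> (\<forall>n z. ((deriv ^^ n) f) differentiable (at z))"

text \<open>A second-order differential function F(t,x,u,u_t,u_x,u_xx) and its formal
  Lagrangian L(t,x,nu,u,u_t,u_x,u_xx) = nu * F(t,x,u,u_t,u_x,u_xx).\<close>
type_synonym difffun = "real \<Rightarrow> real \<Rightarrow> real \<Rightarrow> real \<Rightarrow> real \<Rightarrow> real \<Rightarrow> real"
type_synonym lagr = "real \<Rightarrow> real \<Rightarrow> real \<Rightarrow> real \<Rightarrow> real \<Rightarrow> real \<Rightarrow> real \<Rightarrow> real"

definition formal_lagrangian :: "difffun \<Rightarrow> lagr" where
  "formal_lagrangian F = (\<lambda>t x v w wt wx wxx. v * F t x w wt wx wxx)"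

text \<open>Variational derivative delta L / delta u, evaluated along given functions
  u(t,x) and nu(t,x); the total derivatives D_t, D_x evaluated along (u,nu) are the
  partial derivatives of the composite functions of (t,x).\<close>
definition euler_u :: "lagr \<Rightarrow> (real \<Rightarrow> real \<Rightarrow> real) \<Rightarrow> (real \<Rightarrow> real \<Rightarrow> real) \<Rightarrow> real \<Rightarrow> real \<Rightarrow> real" where
  "euler_u L u \<nu> t x =
     deriv (\<lambda>p. L t x (\<nu> t x) p (pdt u t x) (pdx u t x) (pdx (pdx u) t x)) (u t x)
   - pdt (\<lambda>t x. deriv (\<lambda>p. L t x (\<nu> t x) (u t x) p (pdx u t x) (pdx (pdx u) t x)) (pdt u t x)) t x
   - pdx (\<lambda>t x. deriv (\<lambda>p. L t x (\<nu> t x) (u t x) (pdt u t x) p (pdx (pdx u) t x)) (pdx u t x)) t x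
   + pdx (pdx (\<lambda>t x. deriv (\<lambda>p. L t x (\<nu> t x) (u t x) (pdt u t x) (pdx u t x) p) (pdx (pdx u) t x))) t x"

definition adjoint :: "difffun \<Rightarrow> (real \<Rightarrow> real \<Rightarrow> real) \<Rightarrow> (real \<Rightarrow> real \<Rightarrow> real) \<Rightarrow> real \<Rightarrow> real \<Rightarrow> real" where
  "adjoint F u \<nu> = euler_u (formal_lagrangian F) u \<nu>"

definition quasi_self_adjoint_with :: "difffun \<Rightarrow> (real \<Rightarrow> real) \<Rightarrow> bool" where
  "quasi_self_adjoint_with F \<phi> \<longleftrightarrow>
     (\<forall>w. \<phi> w \<noteq> 0) \<and>
     (\<exists>\<Lambda> :: real \<Rightarrow> real \<Rightarrow> real \<Rightarrow> real \<Rightarrow> real \<Rightarrow> real \<Rightarrow> real \<Rightarrow> real \<Rightarrow> real.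
        \<forall>u. smooth2 u \<longrightarrow> (\<forall>t x.
          adjoint F u (\<lambda>t x. \<phi> (u t x)) t x =
            \<Lambda> t x (u t x) (pdt u t x) (pdx u t x) (pdt (pdt u) t x) (pdt (pdx u) t x) (pdx (pdx u) t x)
            * F t x (u t x) (pdt u t x) (pdx u t x) (pdx (pdx u) t x)))"

end

theory Submission
  imports Defs
begin

lemma partial_x:
  assumes "(\<lambda>q. v (fst q) (snd q)) differentiable (at (t,x))"
  shows "((\<lambda>y. v t y) has_real_derivative pdx v t x) (at x)"
proof -
  have "((\<lambda>y. (t, y)) has_derivative (\<lambda>h. (0, h))) (at x)"
    by (auto intro!: derivative_eq_intros)
  then have "(\<lambda>y. (t, y)) differentiable (at x)"
    unfolding differentiable_def by blast
  then have "((\<lambda>q. v (fst q) (snd q)) \<circ> (\<lambda>y. (t, y))) differentiable (at x)"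
    using assms by (intro differentiable_chain_at) auto
  then have "(\<lambda>y. v t y) differentiable (at x)" by (simp add: o_def)
  then show ?thesis unfolding pdx_def using DERIV_deriv_iff_real_differentiable by blast
qed

lemma partial_t:
  assumes "(\<lambda>q. v (fst q) (snd q)) differentiable (at (t,x))"
  shows "((\<lambda>s. v s x) has_real_derivative pdt v t x) (at t)"
proof -
  have "((\<lambda>s. (s, x)) has_derivative (\<lambda>h. (h, 0))) (at t)"
    by (auto intro!: derivative_eq_intros)
  then have "(\<lambda>s. (s, x)) differentiable (at t)"
    unfolding differentiable_def by blast
  then have "((\<lambda>q. v (fst q) (snd q)) \<circ> (\<lambda>s. (s, x))) differentiable (at t)"
    using assms by (intro differentiable_chain_at) auto
  then have "(\<lambda>s. v s x) differentiable (at t)" by (simp add: o_def)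
  then show ?thesis unfolding pdt_def using DERIV_deriv_iff_real_differentiable by blast
qed

lemma s1_deriv:
  assumes "smooth1 f" shows "(f has_real_derivative deriv f z) (at z)"
proof -
  have "((deriv ^^ 0) f) differentiable (at z)" using assms unfolding smooth1_def by blast
  then show ?thesis using DERIV_deriv_iff_real_differentiable by auto
qed

lemma s1_deriv2:
  assumes "smooth1 f" shows "(deriv f has_real_derivative deriv (deriv f) z) (at z)"
proof -
  have "((deriv ^^ 1) f) differentiable (at z)" using assms unfolding smooth1_def by blast
  then show ?thesis using DERIV_deriv_iff_real_differentiable by auto
qed

lemma chain_eq:
  assumes "\<And>z. (F has_real_derivative F' z) (at z)"
    and "(G has_real_derivative G') (at y)"
    and "D = F' (G y) * G'"
  shows "((\<lambda>y. F (G y)) has_real_derivative D) (at y)"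
  using DERIV_chain2[OF assms(1) assms(2)] assms(3) by simp

theorem corollary1:
  fixes f g h P :: "real \<Rightarrow> real" and M :: real
  assumes "smooth1 f" and "smooth1 g" and "smooth1 h"
    and "\<forall>z. f z \<noteq> 0" and "\<forall>z. g z \<noteq> 0" and "\<forall>z. deriv g z \<noteq> 0"
    and "\<forall>z. (P has_real_derivative ((deriv g z + h z) / g z)) (at z)"
    and "M \<noteq> 0"
  shows "quasi_self_adjoint_with
           (\<lambda>t x w wt wx wxx. wt - f w * wx - g w * wxx + h w * wx ^ 2)
           (\<lambda>w. M * exp (- P w))"
  unfolding quasi_self_adjoint_with_def
proof (intro conjI allI impI exI)
  fix w show "M * exp (- P w) \<noteq> 0" using assms(8) by simp
next
  fix u :: "real \<Rightarrow> real \<Rightarrow> real" and t x :: real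
  assume su: "smooth2 u"
  define \<phi> where "\<phi> = (\<lambda>z. M * exp (- P z))"
  define Q where "Q = (\<lambda>z. (deriv g z + h z) / g z)"
  have gnz: "\<And>z. g z \<noteq> 0" using assms(5) by blast
  have dphi: "\<And>z. (\<phi> has_real_derivative (- \<phi> z * Q z)) (at z)"
    unfolding \<phi>_def Q_def using assms(7)
    by (auto intro!: derivative_eq_intros)
  have df: "\<And>z. (f has_real_derivative deriv f z) (at z)" by (rule s1_deriv[OF assms(1)])
  have dg: "\<And>z. (g has_real_derivative deriv g z) (at z)" by (rule s1_deriv[OF assms(2)])
  have dh: "\<And>z. (h has_real_derivative deriv h z) (at z)" by (rule s1_deriv[OF assms(3)])
  have sm: "\<And>bs p. (\<lambda>q. iterD bs u (fst q) (snd q)) differentiable (at p)"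
    using su unfolding smooth2_def by blast
  have Ux: "\<And>y. ((\<lambda>y. u t y) has_real_derivative pdx u t y) (at y)"
    using partial_x[OF sm[of "[]"]] by simp
  have Uxx: "\<And>y. ((\<lambda>y. pdx u t y) has_real_derivative pdx (pdx u) t y) (at y)"
    using partial_x[OF sm[of "[False]"]] by simp
  have Ut: "((\<lambda>s. u s x) has_real_derivative pdt u t x) (at t)"
    using partial_t[OF sm[of "[]"]] by simp
  note cphi = chain_eq[OF dphi] and cf = chain_eq[OF df] and cg = chain_eq[OF dg] and ch = chain_eq[OF dh]
  have T1: "deriv (\<lambda>p. \<phi> (u t x) * (pdt u t x - f p * pdx u t x - g p * pdx (pdx u) t x + h p * (pdx u t x)\<^sup>2)) (u t x)
     = \<phi> (u t x) * (- deriv f (u t x) * pdx u t x - deriv g (u t x) * pdx (pdx u) t x + deriv h (u t x) * (pdx u t x)\<^sup>2)"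
    by (rule DERIV_imp_deriv) (auto intro!: derivative_eq_intros df dg dh simp: algebra_simps)
  have E2: "(\<lambda>t x. deriv (\<lambda>p. \<phi> (u t x) * (p - f (u t x) * pdx u t x - g (u t x) * pdx (pdx u) t x + h (u t x) * (pdx u t x)\<^sup>2)) (pdt u t x))
     = (\<lambda>t x. \<phi> (u t x))"
    by (intro ext DERIV_imp_deriv) (auto intro!: derivative_eq_intros)
  have E3: "(\<lambda>t x. deriv (\<lambda>p. \<phi> (u t x) * (pdt u t x - f (u t x) * p - g (u t x) * pdx (pdx u) t x + h (u t x) * p\<^sup>2)) (pdx u t x))
     = (\<lambda>t x. \<phi> (u t x) * (- f (u t x) + 2 * h (u t x) * pdx u t x))"
    by (intro ext DERIV_imp_deriv) (auto intro!: derivative_eq_intros simp: algebra_simps)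
  have E4: "(\<lambda>t x. deriv (\<lambda>p. \<phi> (u t x) * (pdt u t x - f (u t x) * pdx u t x - g (u t x) * p + h (u t x) * (pdx u t x)\<^sup>2)) (pdx (pdx u) t x))
     = (\<lambda>t x. - (\<phi> (u t x) * g (u t x)))"
    by (intro ext DERIV_imp_deriv) (auto intro!: derivative_eq_intros simp: algebra_simps)
  have D2: "pdt (\<lambda>t x. \<phi> (u t x)) t x = - \<phi> (u t x) * Q (u t x) * pdt u t x"
    unfolding pdt_def by (rule DERIV_imp_deriv, rule cphi[OF Ut]) (simp add: pdt_def)
  have D3: "pdx (\<lambda>t x. \<phi> (u t x) * (- f (u t x) + 2 * h (u t x) * pdx u t x)) t x
     = (- \<phi> (u t x) * Q (u t x) * pdx u t x) * (- f (u t x) + 2 * h (u t x) * pdx u t x)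
       + \<phi> (u t x) * (- deriv f (u t x) * pdx u t x + 2 * deriv h (u t x) * pdx u t x * pdx u t x
           + 2 * h (u t x) * pdx (pdx u) t x)"
    unfolding pdx_def[of "\<lambda>t x. \<phi> (u t x) * (- f (u t x) + 2 * h (u t x) * pdx u t x)"]
    by (rule DERIV_imp_deriv) (auto intro!: derivative_eq_intros cphi cf ch Ux Uxx simp: algebra_simps)
  have D4a: "pdx (\<lambda>t x. - (\<phi> (u t x) * g (u t x))) = (\<lambda>t x. \<phi> (u t x) * h (u t x) * pdx u t x)"
  proof (intro ext)
    fix t' x'
    have Ux': "\<And>y. ((\<lambda>y. u t' y) has_real_derivative pdx u t' y) (at y)"
      using partial_x[OF sm[of "[]"]] by simp
    show "pdx (\<lambda>t x. - (\<phi> (u t x) * g (u t x))) t' x' = \<phi> (u t' x') * h (u t' x') * pdx u t' x'"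
        unfolding pdx_def[of "\<lambda>t x. - (\<phi> (u t x) * g (u t x))"]
      by (rule DERIV_imp_deriv) (auto intro!: derivative_eq_intros cphi cg Ux' simp: Q_def field_simps gnz)
  qed
  have D4: "pdx (\<lambda>t x. \<phi> (u t x) * h (u t x) * pdx u t x) t x
     = (- \<phi> (u t x) * Q (u t x) * pdx u t x) * h (u t x) * pdx u t x
       + \<phi> (u t x) * (deriv h (u t x) * pdx u t x) * pdx u t x + \<phi> (u t x) * h (u t x) * pdx (pdx u) t x"
    unfolding pdx_def[of "\<lambda>t x. \<phi> (u t x) * h (u t x) * pdx u t x"]
    by (rule DERIV_imp_deriv) (auto intro!: derivative_eq_intros cphi ch Ux Uxx simp: algebra_simps)
  have key: "adjoint (\<lambda>t x w wt wx wxx. wt - f w * wx - g w * wxx + h w * wx\<^sup>2) u (\<lambda>t x. \<phi> (u t x)) t x =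
         \<phi> (u t x) * Q (u t x) *
         (pdt u t x - f (u t x) * pdx u t x - g (u t x) * pdx (pdx u) t x + h (u t x) * (pdx u t x)\<^sup>2)"
    unfolding adjoint_def euler_u_def formal_lagrangian_def
    apply (simp only: T1 E2 E3 E4 D2 D3 D4a D4)
    apply (simp add: Q_def field_simps gnz power2_eq_square)
    done
  then show "adjoint (\<lambda>t x w wt wx wxx. wt - f w * wx - g w * wxx + h w * wx\<^sup>2) u (\<lambda>t x. M * exp (- P (u t x))) t x =
         (\<lambda>t x w wt wx wtt wtx wxx. M * exp (- P w) * ((deriv g w + h w) / g w)) t x (u t x) (pdt u t x) (pdx u t x) (pdt (pdt u) t x) (pdt (pdx u) t x) (pdx (pdx u) t x) *
         (pdt u t x - f (u t x) * pdx u t x - g (u t x) * pdx (pdx u) t x + h (u t x) * (pdx u t x)\<^sup>2)"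
    by (simp add: \<phi>_def Q_def)
qed

end
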